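(* Let $M$ be a finite monoid and $k$ a field. If there exist two irreducible elements $p,q\in M$ that are not associates, then the monoid algebra $kM$ is of infinite representation type.
   Context: A non-unit $p$ in a monoid $M$ is irreducible if whenever $p=ab$ with $a,b\in M$, then $a$ is a unit or $b$ is a unit. Two elements $a,b\in M$ are associates if there exist units $u,v\in M$ with $a=ubv$. A finite-dimensional $k$-algebra is of infinite representation type if it has infinitely many isomorphism classes of finite-dimensional indecomposable modules. *)

theory Defs
  imports "Jordan_Normal_Form.Matrix"
begin

definition monoid_unit :: "'m::monoid_mult \<Rightarrow> bool" where
  "monoid_unit u \<longleftrightarrow> (\<exists>v. u * v = 1 \<and> v * u = 1)"

definition monoid_irreducible :: "'m::monoid_mult \<Rightarrow> bool" where
  "monoid_irreducible p \<longleftrightarrow> \<not> monoid_unit p \<and>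
     (\<forall>a b. p = a * b \<longrightarrow> monoid_unit a \<or> monoid_unit b)"

definition monoid_associates :: "'m::monoid_mult \<Rightarrow> 'm \<Rightarrow> bool" where
  "monoid_associates a b \<longleftrightarrow> (\<exists>u v. monoid_unit u \<and> monoid_unit v \<and> a = u * b * v)"

text \<open>Elements of kM are functions M -> k (finite support is automatic since M is finite);
  multiplication is convolution, unit is the indicator of 1.\<close>

definition malg_mult :: "('m::{monoid_mult,finite} \<Rightarrow> 'k::field) \<Rightarrow> ('m \<Rightarrow> 'k) \<Rightarrow> ('m \<Rightarrow> 'k)" where
  "malg_mult f g = (\<lambda>x. \<Sum>(a, b) \<in> {(a, b). a * b = x}. f a * g b)"

definition malg_one :: "'m::{monoid_mult,finite} \<Rightarrow> 'k::field" where
  "malg_one = (\<lambda>x. if x = 1 then 1 else 0)"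

text \<open>A kM-module of k-dimension n is given (after choosing a basis) by the action map,
  a unital k-algebra homomorphism from kM to the n x n matrices over k.\<close>

definition malg_module :: "nat \<Rightarrow> (('m::{monoid_mult,finite} \<Rightarrow> 'k::field) \<Rightarrow> 'k mat) \<Rightarrow> bool" where
  "malg_module n \<phi> \<longleftrightarrow>
     (\<forall>f. \<phi> f \<in> carrier_mat n n) \<and>
     (\<forall>f g. \<phi> (\<lambda>x. f x + g x) = \<phi> f + \<phi> g) \<and>
     (\<forall>c f. \<phi> (\<lambda>x. c * f x) = c \<cdot>\<^sub>m \<phi> f) \<and>
     (\<forall>f g. \<phi> (malg_mult f g) = \<phi> f * \<phi> g) \<and>
     \<phi> malg_one = 1\<^sub>m n"

definition malg_module_iso ::
  "nat \<times> (('m::{monoid_mult,finite} \<Rightarrow> 'k::field) \<Rightarrow> 'k mat) \<Rightarrow> nat \<times> (('m \<Rightarrow> 'k) \<Rightarrow> 'k mat) \<Rightarrow> bool" where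
  "malg_module_iso V W \<longleftrightarrow> fst V = fst W \<and>
     (\<exists>P \<in> carrier_mat (fst V) (fst V). invertible_mat P \<and> (\<forall>f. P * snd V f = snd W f * P))"

definition malg_direct_sum ::
  "nat \<times> (('m::{monoid_mult,finite} \<Rightarrow> 'k::field) \<Rightarrow> 'k mat) \<Rightarrow> nat \<times> (('m \<Rightarrow> 'k) \<Rightarrow> 'k mat)
   \<Rightarrow> nat \<times> (('m \<Rightarrow> 'k) \<Rightarrow> 'k mat)" where
  "malg_direct_sum V W = (fst V + fst W,
     \<lambda>f. four_block_mat (snd V f) (0\<^sub>m (fst V) (fst W)) (0\<^sub>m (fst W) (fst V)) (snd W f))"

definition malg_indecomposable ::
  "nat \<times> (('m::{monoid_mult,finite} \<Rightarrow> 'k::field) \<Rightarrow> 'k mat) \<Rightarrow> bool" where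
  "malg_indecomposable V \<longleftrightarrow> malg_module (fst V) (snd V) \<and> fst V > 0 \<and>
     \<not> (\<exists>U W. malg_module (fst U) (snd U) \<and> malg_module (fst W) (snd W) \<and>
              fst U > 0 \<and> fst W > 0 \<and> malg_module_iso V (malg_direct_sum U W))"

definition malg_infinite_rep_type :: "('m::{monoid_mult,finite} \<Rightarrow> 'k::field) itself \<Rightarrow> bool" where
  "malg_infinite_rep_type _ \<longleftrightarrow>
     infinite ({V :: nat \<times> (('m \<Rightarrow> 'k) \<Rightarrow> 'k mat). malg_indecomposable V}
               // {(V, W). malg_module_iso V W})"

end

theory Submission
  imports Defs
begin


lemma unit_right_inv:
  fixes x z :: "'m::{monoid_mult,finite}"
  assumes "x * z = 1" shows "z * x = 1"
proof -
  have "surj (\<lambda>t. x * t)"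
    by (metis assms mult.assoc mult_1 surjI)
  hence "inj (\<lambda>t. x * t)" by (simp add: finite_UNIV_surj_inj)
  moreover have "x * (z * x) = x * 1" using assms by (simp add: mult.assoc[symmetric])
  ultimately show ?thesis by (meson injD)
qed

lemma unit_mult_iff:
  fixes a b :: "'m::{monoid_mult,finite}"
  shows "monoid_unit (a * b) \<longleftrightarrow> monoid_unit a \<and> monoid_unit b"
proof
  assume "monoid_unit (a * b)"
  then obtain v where v: "a * b * v = 1" "v * (a * b) = 1" unfolding monoid_unit_def by blast
  have "a * (b * v) = 1" using v by (simp add: mult.assoc)
  hence "(b * v) * a = 1" by (rule unit_right_inv)
  hence ua: "monoid_unit a" unfolding monoid_unit_def using \<open>a * (b * v) = 1\<close> by blast
  have "(v * a) * b = 1" using v by (simp add: mult.assoc)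
  hence "b * (v * a) = 1" by (rule unit_right_inv)
  hence "monoid_unit b" unfolding monoid_unit_def using \<open>(v * a) * b = 1\<close> by blast
  with ua show "monoid_unit a \<and> monoid_unit b" by blast
next
  assume "monoid_unit a \<and> monoid_unit b"
  then obtain a' b' where "a * a' = 1" "a' * a = 1" "b * b' = 1" "b' * b = 1"
    unfolding monoid_unit_def by blast
  hence "(a * b) * (b' * a') = 1" "(b' * a') * (a * b) = 1"
    by (simp_all add: mult.assoc, metis mult.assoc mult_1, metis mult.assoc mult_1)
  thus "monoid_unit (a * b)" unfolding monoid_unit_def by blast
qed

lemma unit_inv:
  fixes u :: "'m::monoid_mult"
  assumes "monoid_unit u" obtains u' where "monoid_unit u'" "u' * u = 1" "u * u' = 1"
  using assms unfolding monoid_unit_def by blast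

lemma assoc_nonunit:
  fixes x p :: "'m::{monoid_mult,finite}"
  assumes "monoid_irreducible p" "monoid_associates x p" shows "\<not> monoid_unit x"
  using assms unfolding monoid_irreducible_def monoid_associates_def
  by (auto simp: unit_mult_iff)

lemma assoc_refl:
  fixes p :: "'m::monoid_mult"
  shows "monoid_associates p p"
  unfolding monoid_associates_def monoid_unit_def by (rule exI[of _ 1], rule exI[of _ 1]) auto

lemma assoc_sym:
  fixes p q :: "'m::monoid_mult"
  assumes "monoid_associates q p" shows "monoid_associates p q"
proof -
  obtain u v where uv: "monoid_unit u" "monoid_unit v" "q = u * p * v"
    using assms unfolding monoid_associates_def by blast
  obtain u' where u': "monoid_unit u'" "u' * u = 1" "u * u' = 1" using uv(1) by (rule unit_inv)
  obtain v' where v': "monoid_unit v'" "v' * v = 1" "v * v' = 1" using uv(2) by (rule unit_inv)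
  have "u' * q * v' = (u' * u) * p * (v * v')" using uv(3) by (simp add: mult.assoc)
  hence "p = u' * q * v'" using u' v' by simp
  thus ?thesis using u' v' unfolding monoid_associates_def by blast
qed

lemma assoc_left_unit:
  fixes a b p :: "'m::{monoid_mult,finite}"
  assumes "monoid_unit a" shows "monoid_associates (a * b) p \<longleftrightarrow> monoid_associates b p"
proof
  obtain a' where a': "monoid_unit a'" "a' * a = 1" "a * a' = 1" using assms by (rule unit_inv)
  assume "monoid_associates (a * b) p"
  then obtain u v where uv: "monoid_unit u" "monoid_unit v" "a * b = u * p * v"
    unfolding monoid_associates_def by blast
  have "b = a' * (a * b)" using a' by (simp add: mult.assoc[symmetric])
  also have "\<dots> = (a' * u) * p * v" using uv by (simp add: mult.assoc)
  finally show "monoid_associates b p" unfolding monoid_associates_def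
    using uv a' by (metis unit_mult_iff)
next
  assume "monoid_associates b p"
  then obtain u v where uv: "monoid_unit u" "monoid_unit v" "b = u * p * v"
    unfolding monoid_associates_def by blast
  hence "a * b = (a * u) * p * v" by (simp add: mult.assoc)
  thus "monoid_associates (a * b) p" unfolding monoid_associates_def
    using uv assms by (metis unit_mult_iff)
qed

lemma assoc_right_unit:
  fixes a b p :: "'m::{monoid_mult,finite}"
  assumes "monoid_unit b" shows "monoid_associates (a * b) p \<longleftrightarrow> monoid_associates a p"
proof
  obtain b' where b': "monoid_unit b'" "b' * b = 1" "b * b' = 1" using assms by (rule unit_inv)
  assume "monoid_associates (a * b) p"
  then obtain u v where uv: "monoid_unit u" "monoid_unit v" "a * b = u * p * v"
    unfolding monoid_associates_def by blast
  have "a = (a * b) * b'" using b' by (simp add: mult.assoc)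
  also have "\<dots> = u * p * (v * b')" using uv by (simp add: mult.assoc)
  finally show "monoid_associates a p" unfolding monoid_associates_def
    using uv b' by (metis unit_mult_iff)
next
  assume "monoid_associates a p"
  then obtain u v where uv: "monoid_unit u" "monoid_unit v" "a = u * p * v"
    unfolding monoid_associates_def by blast
  hence "a * b = u * p * (v * b)" by (simp add: mult.assoc)
  thus "monoid_associates (a * b) p" unfolding monoid_associates_def
    using uv assms by (metis unit_mult_iff)
qed

lemma assoc_nonunit_prod:
  fixes a b p :: "'m::{monoid_mult,finite}"
  assumes "monoid_irreducible p" "\<not> monoid_unit a" "\<not> monoid_unit b"
  shows "\<not> monoid_associates (a * b) p"
proof
  assume "monoid_associates (a * b) p"
  hence "monoid_associates p (a * b)" by (rule assoc_sym)
  then obtain u v where uv: "monoid_unit u" "monoid_unit v" "p = u * (a * b) * v"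
    unfolding monoid_associates_def by blast
  hence "p = (u * a) * (b * v)" by (simp add: mult.assoc)
  moreover have "\<not> monoid_unit (u * a)" "\<not> monoid_unit (b * v)"
    using assms uv by (simp_all add: unit_mult_iff)
  ultimately show False using assms(1) unfolding monoid_irreducible_def by blast
qed

lemma pairs_units:
  "{(a, b). monoid_unit ((a::'m::{monoid_mult,finite}) * b)} = {x. monoid_unit x} \<times> {x. monoid_unit x}"
  by (auto simp: unit_mult_iff)

lemma pairs_assoc:
  fixes p :: "'m::{monoid_mult,finite}"
  assumes "monoid_irreducible p"
  shows "{(a, b). monoid_associates (a * b) p} =
     {x. monoid_unit x} \<times> {x. monoid_associates x p} \<union> {x. monoid_associates x p} \<times> {x. monoid_unit x}"
  using assms assoc_left_unit assoc_right_unit assoc_nonunit_prod by fastforce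

lemma conv_sum:
  fixes f g :: "'m::{monoid_mult,finite} \<Rightarrow> 'k::field"
  shows "(\<Sum>z\<in>S. malg_mult f g z) = (\<Sum>(a, b)\<in>{(a, b). a * b \<in> S}. f a * g b)"
proof -
  have "(\<Sum>(a, b)\<in>{(a, b). a * b \<in> S}. f a * g b) =
     (\<Sum>z\<in>S. \<Sum>(a, b)\<in>{x. x \<in> {(a, b). a * b \<in> S} \<and> (\<lambda>(a,b). a * b) x = z}. f a * g b)"
    by (rule sum.group[symmetric]) auto
  also have "\<dots> = (\<Sum>z\<in>S. malg_mult f g z)"
    unfolding malg_mult_def
    by (rule sum.cong[OF refl], rule sum.cong) auto
  finally show ?thesis by simp
qed



definition amat :: "nat \<Rightarrow> nat \<Rightarrow> 'k::field" where
  "amat i j = (if odd j \<and> i + 1 = j then 1 else 0)"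
definition bmat :: "nat \<Rightarrow> nat \<Rightarrow> 'k::field" where
  "bmat i j = (if odd j \<and> i = j + 1 then 1 else 0)"

lemma ab_prods:
  "amat i k * amat k j = (0::'k::field)" "amat i k * bmat k j = (0::'k)"
  "bmat i k * amat k j = (0::'k)" "bmat i k * bmat k j = (0::'k)"
  by (auto simp: amat_def bmat_def)

lemma ab_diag: "amat i i = (0::'k::field)" "bmat i i = (0::'k)"
  by (auto simp: amat_def bmat_def)

definition sumS :: "'m set \<Rightarrow> ('m \<Rightarrow> 'k::field) \<Rightarrow> 'k" where
  "sumS S f = (\<Sum>x\<in>S. f x)"

definition Gs :: "'m::monoid_mult set" where "Gs = {x. monoid_unit x}"
definition As :: "'m::monoid_mult \<Rightarrow> 'm set" where "As p = {x. monoid_associates x p}"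

definition rep :: "nat \<Rightarrow> 'm::{monoid_mult,finite} \<Rightarrow> 'm \<Rightarrow> ('m \<Rightarrow> 'k::field) \<Rightarrow> 'k mat" where
  "rep d p q f = mat d d (\<lambda>(i,j). sumS Gs f * (if i = j then 1 else 0)
      + sumS (As p) f * amat i j + sumS (As q) f * bmat i j)"

lemma sumS_G_mult:
  fixes f g :: "'m::{monoid_mult,finite} \<Rightarrow> 'k::field"
  shows "sumS Gs (malg_mult f g) = sumS Gs f * sumS Gs g"
proof -
  have "sumS Gs (malg_mult f g) = (\<Sum>(a, b)\<in>Gs \<times> Gs. f a * g b)"
    unfolding sumS_def conv_sum Gs_def by (simp only: mem_Collect_eq pairs_units)
  also have "\<dots> = sumS Gs f * sumS Gs g"
    unfolding sumS_def sum_product sum.cartesian_product by simp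
  finally show ?thesis .
qed

lemma sumS_A_mult:
  fixes f g :: "'m::{monoid_mult,finite} \<Rightarrow> 'k::field"
  assumes "monoid_irreducible p"
  shows "sumS (As p) (malg_mult f g) = sumS Gs f * sumS (As p) g + sumS (As p) f * sumS Gs g"
proof -
  have e: "{(a, b). a * b \<in> As p} = Gs \<times> As p \<union> As p \<times> Gs"
    using pairs_assoc[OF assms] unfolding As_def Gs_def by simp
  have disj: "(Gs \<times> As p) \<inter> (As p \<times> Gs) = {}"
    using assoc_nonunit[OF assms] unfolding As_def Gs_def by auto
  have "sumS (As p) (malg_mult f g) = (\<Sum>(a, b)\<in>Gs \<times> As p \<union> As p \<times> Gs. f a * g b)"
    unfolding sumS_def conv_sum e ..
  also have "\<dots> = (\<Sum>(a, b)\<in>Gs \<times> As p. f a * g b) + (\<Sum>(a, b)\<in>As p \<times> Gs. f a * g b)"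
    by (rule sum.union_disjoint) (use disj in auto)
  also have "\<dots> = sumS Gs f * sumS (As p) g + sumS (As p) f * sumS Gs g"
    unfolding sumS_def sum_product sum.cartesian_product by simp
  finally show ?thesis .
qed

lemma rep_module:
  fixes p q :: "'m::{monoid_mult,finite}"
  assumes "monoid_irreducible p" "monoid_irreducible q"
  shows "malg_module d (rep d p q :: ('m \<Rightarrow> 'k::field) \<Rightarrow> 'k mat)"
  unfolding malg_module_def
proof (intro conjI allI)
  fix f :: "'m \<Rightarrow> 'k"
  show "rep d p q f \<in> carrier_mat d d" unfolding rep_def by simp
next
  fix f g :: "'m \<Rightarrow> 'k"
  show "rep d p q (\<lambda>x. f x + g x) = rep d p q f + rep d p q g"
    by (rule eq_matI) (auto simp: rep_def sumS_def sum.distrib algebra_simps)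
next
  fix c and f :: "'m \<Rightarrow> 'k"
  show "rep d p q (\<lambda>x. c * f x) = c \<cdot>\<^sub>m rep d p q f"
    by (rule eq_matI) (auto simp: rep_def sumS_def sum_distrib_left[symmetric] algebra_simps)
next
  fix f g :: "'m \<Rightarrow> 'k"
  show "rep d p q (malg_mult f g) = rep d p q f * rep d p q g"
  proof (rule eq_matI)
    fix i j assume ij: "i < dim_row (rep d p q f * rep d p q g)" "j < dim_col (rep d p q f * rep d p q g)"
    hence i: "i < d" and j: "j < d" unfolding rep_def by auto
    define a1 where "a1 = sumS Gs f" define b1 where "b1 = sumS (As p) f" define c1 where "c1 = sumS (As q) f"
    define a2 where "a2 = sumS Gs g" define b2 where "b2 = sumS (As p) g" define c2 where "c2 = sumS (As q) g"
    have pt: "(a1 * (if i = k then 1 else 0) + b1 * amat i k + c1 * bmat i k) *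
              (a2 * (if k = j then 1 else 0) + b2 * amat k j + c2 * bmat k j)
            = (if k = i then a1 * (a2 * (if i = j then 1 else 0) + b2 * amat i j + c2 * bmat i j) else 0)
              + (if k = j then (b1 * amat i j + c1 * bmat i j) * a2 else 0)" for k
    proof -
      show ?thesis
        by (cases "k = i"; cases "k = j"; auto simp: amat_def bmat_def algebra_simps)
    qed
    have "(rep d p q f * rep d p q g) $$ (i, j) =
       (\<Sum>k<d. (a1 * (if i = k then 1 else 0) + b1 * amat i k + c1 * bmat i k) *
              (a2 * (if k = j then 1 else 0) + b2 * amat k j + c2 * bmat k j))"
      using i j unfolding rep_def a1_def b1_def c1_def a2_def b2_def c2_def
      by (simp add: scalar_prod_def row_def col_def lessThan_atLeast0)
    also have "\<dots> = a1 * (a2 * (if i = j then 1 else 0) + b2 * amat i j + c2 * bmat i j)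
              + (b1 * amat i j + c1 * bmat i j) * a2"
      unfolding pt sum.distrib using i j by simp
    also have "\<dots> = rep d p q (malg_mult f g) $$ (i, j)"
      using i j unfolding rep_def a1_def b1_def c1_def a2_def b2_def c2_def
      by (simp add: sumS_G_mult sumS_A_mult assms algebra_simps)
    finally show "rep d p q (malg_mult f g) $$ (i, j) = (rep d p q f * rep d p q g) $$ (i, j)" by simp
  qed (auto simp: rep_def)
next
  have g1: "sumS Gs (malg_one :: 'm \<Rightarrow> 'k) = 1"
    unfolding sumS_def malg_one_def Gs_def
    by (simp add: sum.delta[of _ 1] monoid_unit_def)
  have a0: "sumS (As r) (malg_one :: 'm \<Rightarrow> 'k) = 0" if "monoid_irreducible r" for r
    unfolding sumS_def malg_one_def As_def
    using assoc_nonunit[OF that, of 1] by (auto simp: monoid_unit_def)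
  show "rep d p q malg_one = (1\<^sub>m d :: 'k mat)"
    by (rule eq_matI) (auto simp: rep_def g1 a0 assms)
qed



lemma comm_struct:
  fixes e :: "nat \<Rightarrow> nat \<Rightarrow> 'k::field"
  assumes d: "d = 2 * n + 1"
  and H1: "\<And>r c. r < d \<Longrightarrow> c < d \<Longrightarrow>
     (if odd c then e r (c - 1) else 0) = (if even r \<and> r + 1 < d then e (r + 1) c else 0)"
  and H2: "\<And>r c. r < d \<Longrightarrow> c < d \<Longrightarrow>
     (if odd c \<and> c + 1 < d then e r (c + 1) else 0) = (if even r \<and> 0 < r then e (r - 1) c else 0)"
  and rc: "r < d" "c < d"
  shows "(r = c \<longrightarrow> e r c = e 0 0) \<and> (r \<noteq> c \<and> \<not> (even r \<and> odd c) \<longrightarrow> e r c = 0)"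
proof -
  have A: "e r c = 0" if "r < d" "c < d" "odd r" "even c" for r c
    using H1[of "r - 1" c] that by auto
  have C: "e (2*i+1) (2*j+1) = e (2*i) (2*j)" if "i < n" "j < n" for i j
    using H1[of "2*i" "2*j+1"] that d by auto
  have S: "e (2*(i+1)) (2*(j+1)) = e (2*i+1) (2*j+1)" if "i < n" "j < n" for i j
    using H2[of "2*i+2" "2*j+1"] that d by auto
  have B1: "e (2*n) (2*j) = 0" if "j < n" for j
    using H1[of "2*n" "2*j+1"] that d by auto
  have B2: "e 0 (2*(j+1)) = 0" if "j < n" for j
    using H2[of 0 "2*j+1"] that d by auto
  have T: "e (2*(i+t)) (2*(j+t)) = e (2*i) (2*j)" if "i + t \<le> n" "j + t \<le> n" for i j t
    using that
  proof (induction t)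
    case 0 then show ?case by simp
  next
    case (Suc t)
    have "e (2*(i+Suc t)) (2*(j+Suc t)) = e (2*((i+t)+1)) (2*((j+t)+1))" by simp
    also have "\<dots> = e (2*(i+t)) (2*(j+t))"
      using S[of "i+t" "j+t"] C[of "i+t" "j+t"] Suc.prems by simp
    also have "\<dots> = e (2*i) (2*j)" using Suc by simp
    finally show ?case .
  qed
  have B: "e (2*i) (2*j) = (if i = j then e 0 0 else 0)" if "i \<le> n" "j \<le> n" for i j
  proof (cases "i = j")
    case True then show ?thesis using T[of 0 i 0] that by simp
  next
    case False
    show ?thesis
    proof (cases "i < j")
      case True
      have "e (2*i) (2*j) = e 0 (2*(j-i))" using T[of 0 i "j - i"] that True by simp
      also have "\<dots> = e 0 (2*((j-i-1)+1))" using True by (simp add: Suc_diff_Suc)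
      also have "\<dots> = 0" using B2[of "j-i-1"] True that by simp
      finally show ?thesis using False by simp
    next
      case False2: False
      have "e (2*i) (2*j) = e (2*n) (2*(j + (n - i)))" using T[of i "n - i" j] that False2 by simp
      also have "\<dots> = 0" using B1[of "j + (n-i)"] that False False2 by simp
      finally show ?thesis using False by simp
    qed
  qed
  show ?thesis
  proof (cases "even r")
    case er: True
    then obtain i where i: "r = 2*i" by blast
    show ?thesis
    proof (cases "even c")
      case True
      then obtain j where j: "c = 2*j" by blast
      show ?thesis using B[of i j] i j rc d by auto
    next
      case False
      thus ?thesis using er by auto
    qed
  next
    case or: False
    then obtain i where i: "r = 2*i+1" by (metis oddE)
    show ?thesis
    proof (cases "even c")
      case True
      thus ?thesis using A[of r c] rc or by auto
    next
      case False
      then obtain j where j: "c = 2*j+1" by (metis oddE)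
      have "i < n" "j < n" using i j rc d by auto
      thus ?thesis using C[of i j] B[of i j] i j by auto
    qed
  qed
qed

lemma idem_struct:
  fixes e :: "nat \<Rightarrow> nat \<Rightarrow> 'k::field"
  assumes St: "\<And>r c. r < d \<Longrightarrow> c < d \<Longrightarrow>
      (r = c \<longrightarrow> e r c = e 0 0) \<and> (r \<noteq> c \<and> \<not> (even r \<and> odd c) \<longrightarrow> e r c = 0)"
  and Id: "\<And>r c. r < d \<Longrightarrow> c < d \<Longrightarrow> (\<Sum>k<d. e r k * e k c) = e r c"
  and d: "0 < d"
  shows "(e 0 0 = 0 \<or> e 0 0 = 1) \<and> (\<forall>r<d. \<forall>c<d. e r c = (if r = c then e 0 0 else 0))"
proof -
  define l where "l = e 0 0"
  have pt0: "e 0 k * e k 0 = (if k = 0 then l * l else 0)" if "k < d" for k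
  proof (cases "k = 0")
    case False
    show ?thesis
    proof (cases "even k")
      case True
      hence "e 0 k = 0" using St[of 0 k] that d False by simp
      thus ?thesis using False by simp
    next
      case odd: False
      hence "e k 0 = 0" using St[of k 0] that d False by simp
      thus ?thesis using False by simp
    qed
  qed (simp add: l_def)
  have "l = (\<Sum>k<d. e 0 k * e k 0)" using Id[of 0 0] d by (simp add: l_def)
  also have "\<dots> = (\<Sum>k<d. if k = 0 then l * l else 0)" by (rule sum.cong) (simp_all add: pt0)
  also have "\<dots> = l * l" using d by simp
  finally have ll: "l * l = l" by simp
  have l01: "l = 0 \<or> l = 1"
  proof (cases "l = 0")
    case False
    hence "l * l = l * 1" using ll by simp
    thus ?thesis using False mult_left_cancel[of l l 1] by blast
  qed simp
  have off: "e r c = 0" if "r < d" "c < d" "even r" "odd c" for r c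
  proof -
    have rc: "r \<noteq> c" using that by auto
    have pt: "e r k * e k c = (if k = r then l * e r c else 0) + (if k = c then e r c * l else 0)"
      if "k < d" for k
    proof -
      consider "k = r" | "k = c" | "k \<noteq> r" "k \<noteq> c" by blast
      thus ?thesis
      proof cases
        case 1 thus ?thesis using St[of r r] \<open>r < d\<close> rc by (simp add: l_def)
      next
        case 2 thus ?thesis using St[of c c] \<open>c < d\<close> rc by (simp add: l_def)
      next
        case 3
        show ?thesis
        proof (cases "even k")
          case True
          hence "e r k = 0" using St[of r k] that \<open>r < d\<close> 3 by simp
          thus ?thesis using 3 by simp
        next
          case False
          hence "e k c = 0" using St[of k c] that \<open>c < d\<close> 3 by simp
          thus ?thesis using 3 by simp
        qed
      qed
    qed
    have "e r c = (\<Sum>k<d. e r k * e k c)" using Id that by simp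
    also have "\<dots> = (\<Sum>k<d. (if k = r then l * e r c else 0) + (if k = c then e r c * l else 0))"
      by (rule sum.cong) (simp_all add: pt)
    also have "\<dots> = l * e r c + e r c * l"
      using that by (simp add: sum.distrib)
    finally have eq: "e r c = l * e r c + e r c * l" .
    show ?thesis
    proof (cases "l = 0")
      case True thus ?thesis using eq by simp
    next
      case False
      hence "l = 1" using l01 by simp
      hence "e r c + 0 = e r c + e r c" using eq by simp
      thus ?thesis by (metis add_left_cancel)
    qed
  qed
  show ?thesis
  proof (intro conjI allI impI)
    show "e 0 0 = 0 \<or> e 0 0 = 1" using l01 by (simp add: l_def)
    fix r c assume "r < d" "c < d"
    thus "e r c = (if r = c then e 0 0 else 0)"
      using St[of r c] off[of r c] by auto
  qed
qed



lemma sumS_delta: "sumS (S::'m::finite set) (\<lambda>x. if x = a then (1::'k::field) else 0) = (if a \<in> S then 1 else 0)"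
  unfolding sumS_def by (simp add: sum.delta)

lemma rep_delta:
  fixes p q :: "'m::{monoid_mult,finite}"
  assumes "monoid_irreducible p" "monoid_irreducible q" "\<not> monoid_associates p q"
  shows "rep d p q (\<lambda>x. if x = p then (1::'k::field) else 0) = mat d d (\<lambda>(i,j). amat i j)"
    and "rep d p q (\<lambda>x. if x = q then (1::'k::field) else 0) = mat d d (\<lambda>(i,j). bmat i j)"
proof -
  have p: "p \<notin> Gs" "p \<in> As p" "p \<notin> As q"
    using assms assoc_nonunit[OF assms(1) assoc_refl] assoc_refl[of p]
    unfolding Gs_def As_def by auto
  have q: "q \<notin> Gs" "q \<in> As q" "q \<notin> As p"
    using assms assoc_nonunit[OF assms(2) assoc_refl] assoc_refl[of q] assoc_sym[of q p]
    unfolding Gs_def As_def by auto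
  show "rep d p q (\<lambda>x. if x = p then (1::'k::field) else 0) = mat d d (\<lambda>(i,j). amat i j)"
    by (rule eq_matI) (auto simp: rep_def sumS_delta p)
  show "rep d p q (\<lambda>x. if x = q then (1::'k::field) else 0) = mat d d (\<lambda>(i,j). bmat i j)"
    by (rule eq_matI) (auto simp: rep_def sumS_delta q)
qed

lemma sum_EA: "c < d \<Longrightarrow> (\<Sum>k<d. (E r k :: 'k::field) * amat k c) = (if odd c then E r (c - 1) else 0)"
proof -
  assume c: "c < d"
  have "(\<Sum>k<d. E r k * amat k c) = (\<Sum>k<d. if k = c - 1 then (if odd c then E r (c - 1) else 0) else 0)"
    by (rule sum.cong) (auto simp: amat_def)
  also have "\<dots> = (if odd c then E r (c - 1) else 0)" using c by auto
  finally show ?thesis .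
qed

lemma sum_AE: "(\<Sum>k<d. amat r k * (E k c :: 'k::field)) = (if even r \<and> r + 1 < d then E (r + 1) c else 0)"
proof -
  have "(\<Sum>k<d. amat r k * E k c) = (\<Sum>k<d. if k = r + 1 then (if even r then E (r + 1) c else 0) else 0)"
    by (rule sum.cong) (auto simp: amat_def)
  also have "\<dots> = (if even r \<and> r + 1 < d then E (r + 1) c else 0)" by simp
  finally show ?thesis .
qed

lemma sum_EB: "(\<Sum>k<d. (E r k :: 'k::field) * bmat k c) = (if odd c \<and> c + 1 < d then E r (c + 1) else 0)"
proof -
  have "(\<Sum>k<d. E r k * bmat k c) = (\<Sum>k<d. if k = c + 1 then (if odd c then E r (c + 1) else 0) else 0)"
    by (rule sum.cong) (auto simp: bmat_def)
  also have "\<dots> = (if odd c \<and> c + 1 < d then E r (c + 1) else 0)" by simp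
  finally show ?thesis .
qed

lemma sum_BE: "r < d \<Longrightarrow> (\<Sum>k<d. bmat r k * (E k c :: 'k::field)) = (if even r \<and> 0 < r then E (r - 1) c else 0)"
proof -
  assume r: "r < d"
  have "(\<Sum>k<d. bmat r k * E k c) = (\<Sum>k<d. if k = r - 1 then (if even r \<and> 0 < r then E (r - 1) c else 0) else 0)"
    by (rule sum.cong) (auto simp: bmat_def)
  also have "\<dots> = (if even r \<and> 0 < r then E (r - 1) c else 0)" using r by auto
  finally show ?thesis .
qed

lemma mult_entry:
  assumes "A \<in> carrier_mat d d" "B \<in> carrier_mat d d" "r < d" "c < d"
  shows "(A * B) $$ (r, c) = (\<Sum>k<d. A $$ (r, k) * B $$ (k, c))"
  using assms by (simp add: scalar_prod_def lessThan_atLeast0)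

lemma indec:
  fixes p q :: "'m::{monoid_mult,finite}"
  assumes irr: "monoid_irreducible p" "monoid_irreducible q" and na: "\<not> monoid_associates p q"
  and d: "d = 2 * n + 1"
  shows "malg_indecomposable (d, rep d p q :: ('m \<Rightarrow> 'k::field) \<Rightarrow> 'k mat)"
  unfolding malg_indecomposable_def fst_conv snd_conv
proof (intro conjI notI)
  show "malg_module d (rep d p q :: ('m \<Rightarrow> 'k::field) \<Rightarrow> 'k mat)" by (rule rep_module[OF irr])
  show "0 < d" using d by simp
next
  let ?R = "rep d p q :: ('m \<Rightarrow> 'k::field) \<Rightarrow> 'k mat"
  assume "\<exists>U W. malg_module (fst U) (snd U) \<and> malg_module (fst W) (snd W) \<and> 0 < fst U \<and> 0 < fst W \<and>
     malg_module_iso (d, ?R) (malg_direct_sum U W)"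
  then obtain U W :: "nat \<times> (('m \<Rightarrow> 'k) \<Rightarrow> 'k mat)" where
    mU: "malg_module (fst U) (snd U)" and mW: "malg_module (fst W) (snd W)"
    and u0: "0 < fst U" and w0: "0 < fst W" and iso: "malg_module_iso (d, ?R) (malg_direct_sum U W)"
    by blast
  define u where "u = fst U"
  define w where "w = fst W"
  define psi where "psi f = four_block_mat (snd U f) (0\<^sub>m u w) (0\<^sub>m w u) (snd W f)" for f
  have du: "d = u + w" using iso unfolding malg_module_iso_def malg_direct_sum_def u_def w_def by simp
  obtain P where P: "P \<in> carrier_mat d d" "invertible_mat P" and PR: "\<And>f. P * ?R f = psi f * P"
    using iso unfolding malg_module_iso_def malg_direct_sum_def psi_def u_def w_def by auto
  obtain Q where PQ: "P * Q = 1\<^sub>m d" and QP: "Q * P = 1\<^sub>m (dim_row Q)"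
    using P unfolding invertible_mat_def inverts_mat_def by auto
  have Q: "Q \<in> carrier_mat d d"
  proof -
    have "dim_col Q = d" using PQ by (metis index_mult_mat(3) index_one_mat(3))
    moreover have "dim_row Q = d" using QP P
      by (metis carrier_matD(2) index_mult_mat(3) index_one_mat(3))
    ultimately show ?thesis by auto
  qed
  hence QP': "Q * P = 1\<^sub>m d" using QP by simp
  have as: "A * B * C = A * (B * C)" if "A \<in> carrier_mat d d" "B \<in> carrier_mat d d" "C \<in> carrier_mat d d"
    for A B C :: "'k mat" using that by simp
  have mc: "A * B \<in> carrier_mat d d" if "A \<in> carrier_mat d d" "B \<in> carrier_mat d d"
    for A B :: "'k mat" using that by simp
  have one_l: "1\<^sub>m d * A = A" if "A \<in> carrier_mat d d" for A :: "'k mat" using that by simp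
  have Rc: "?R f \<in> carrier_mat d d" for f unfolding rep_def by simp
  have Uc: "snd U f \<in> carrier_mat u u" for f using mU unfolding malg_module_def u_def by blast
  have Wc: "snd W f \<in> carrier_mat w w" for f using mW unfolding malg_module_def w_def by blast
  have psic: "psi f \<in> carrier_mat d d" for f unfolding psi_def du using Uc Wc by simp
  define Dm :: "'k mat" where "Dm = four_block_mat (1\<^sub>m u) (0\<^sub>m u w) (0\<^sub>m w u) (0\<^sub>m w w)"
  have Dc: "Dm \<in> carrier_mat d d" unfolding Dm_def du by simp
  have Dpsi: "Dm * psi f = psi f * Dm" for f
  proof -
    have "Dm * psi f = four_block_mat (snd U f) (0\<^sub>m u w) (0\<^sub>m w u) (0\<^sub>m w w)"
      unfolding Dm_def psi_def using Uc[of f] Wc[of f]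
      by (subst mult_four_block_mat[of _ u u _ w _ w]) auto
    moreover have "psi f * Dm = four_block_mat (snd U f) (0\<^sub>m u w) (0\<^sub>m w u) (0\<^sub>m w w)"
      unfolding Dm_def psi_def using Uc[of f] Wc[of f]
      by (subst mult_four_block_mat[of _ u u _ w _ w]) auto
    ultimately show ?thesis by simp
  qed
  have Qpsi: "Q * psi f = ?R f * Q" for f
  proof -
    have "Q * psi f = Q * psi f * (P * Q)" using PQ Q psic[of f] by simp
    also have "\<dots> = Q * (psi f * P) * Q"
      by (simp only: assoc_mult_mat[OF Q psic[of f] mult_carrier_mat[OF P(1) Q]]
          assoc_mult_mat[OF Q mult_carrier_mat[OF psic[of f] P(1)] Q] assoc_mult_mat[OF psic[of f] P(1) Q])
    also have "\<dots> = Q * (P * ?R f) * Q" by (simp add: PR)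
    also have "\<dots> = (Q * P) * ?R f * Q" by (simp del: assoc_mult_mat add: as mc Q P(1) Rc)
    also have "\<dots> = ?R f * Q" using QP' Rc[of f] by simp
    finally show ?thesis .
  qed
  define E where "E = Q * Dm * P"
  have Ec: "E \<in> carrier_mat d d" unfolding E_def using Q Dc P by simp
  have ER: "E * ?R f = ?R f * E" for f
  proof -
    have "E * ?R f = Q * Dm * (P * ?R f)" unfolding E_def by (simp del: assoc_mult_mat add: as mc Q Dc P(1) Rc psic)
    also have "\<dots> = Q * (Dm * psi f) * P" unfolding PR by (simp del: assoc_mult_mat add: as mc Q Dc P(1) Rc psic)
    also have "\<dots> = (Q * psi f) * Dm * P" unfolding Dpsi by (simp del: assoc_mult_mat add: as mc Q Dc P(1) Rc psic)
    also have "\<dots> = ?R f * E" unfolding Qpsi E_def by (simp del: assoc_mult_mat add: as mc Q Dc P(1) Rc psic)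
    finally show ?thesis .
  qed
  have DD: "Dm * Dm = Dm" unfolding Dm_def
    by (subst mult_four_block_mat[of _ u u _ w _ w]) auto
  have EE: "E * E = E"
  proof -
    have "E * E = Q * Dm * (P * Q) * Dm * P" unfolding E_def by (simp del: assoc_mult_mat add: as mc Q Dc P(1))
    also have "\<dots> = Q * (Dm * Dm) * P" unfolding PQ using Dc by (simp del: assoc_mult_mat add: as mc Q Dc P(1) one_l)
    finally show ?thesis unfolding DD E_def .
  qed
  have PEQ: "P * E * Q = Dm"
  proof -
    have "P * E * Q = (P * Q) * Dm * (P * Q)" unfolding E_def by (simp del: assoc_mult_mat add: as mc Q Dc P(1))
    thus ?thesis unfolding PQ using Dc by simp
  qed
  define e where "e r c = E $$ (r, c)" for r c
  have EA: "E * mat d d (\<lambda>(i,j). amat i j) = mat d d (\<lambda>(i,j). amat i j) * E"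
    using ER[of "\<lambda>x. if x = p then 1 else 0"] unfolding rep_delta[OF irr na] .
  have EB: "E * mat d d (\<lambda>(i,j). bmat i j) = mat d d (\<lambda>(i,j). bmat i j) * E"
    using ER[of "\<lambda>x. if x = q then 1 else 0"] unfolding rep_delta[OF irr na] .
  have H1: "(if odd c then e r (c - 1) else 0) = (if even r \<and> r + 1 < d then e (r + 1) c else 0)"
    if "r < d" "c < d" for r c
  proof -
    let ?M = "mat d d (\<lambda>(i,j). amat i j) :: 'k mat"
    have Mc: "?M \<in> carrier_mat d d" by simp
    have "(E * ?M) $$ (r, c) = (?M * E) $$ (r, c)" using EA by (rule arg_cong)
    hence "(\<Sum>k<d. E $$ (r, k) * ?M $$ (k, c)) = (\<Sum>k<d. ?M $$ (r, k) * E $$ (k, c))"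
      by (simp only: mult_entry[OF Ec Mc that] mult_entry[OF Mc Ec that])
    moreover have "(\<Sum>k<d. E $$ (r, k) * ?M $$ (k, c)) = (\<Sum>k<d. E $$ (r, k) * amat k c)"
      by (rule sum.cong) (use that in auto)
    moreover have "(\<Sum>k<d. ?M $$ (r, k) * E $$ (k, c)) = (\<Sum>k<d. amat r k * E $$ (k, c))"
      by (rule sum.cong) (use that in auto)
    ultimately have "(\<Sum>k<d. E $$ (r, k) * amat k c) = (\<Sum>k<d. amat r k * E $$ (k, c))" by simp
    thus ?thesis using that unfolding e_def
      by (simp only: sum_EA[where E="\<lambda>r c. E $$ (r, c)"] sum_AE[where E="\<lambda>r c. E $$ (r, c)"])
  qed
  have H2: "(if odd c \<and> c + 1 < d then e r (c + 1) else 0) = (if even r \<and> 0 < r then e (r - 1) c else 0)"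
    if "r < d" "c < d" for r c
  proof -
    let ?M = "mat d d (\<lambda>(i,j). bmat i j) :: 'k mat"
    have Mc: "?M \<in> carrier_mat d d" by simp
    have "(E * ?M) $$ (r, c) = (?M * E) $$ (r, c)" using EB by (rule arg_cong)
    hence "(\<Sum>k<d. E $$ (r, k) * ?M $$ (k, c)) = (\<Sum>k<d. ?M $$ (r, k) * E $$ (k, c))"
      by (simp only: mult_entry[OF Ec Mc that] mult_entry[OF Mc Ec that])
    moreover have "(\<Sum>k<d. E $$ (r, k) * ?M $$ (k, c)) = (\<Sum>k<d. E $$ (r, k) * bmat k c)"
      by (rule sum.cong) (use that in auto)
    moreover have "(\<Sum>k<d. ?M $$ (r, k) * E $$ (k, c)) = (\<Sum>k<d. bmat r k * E $$ (k, c))"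
      by (rule sum.cong) (use that in auto)
    ultimately have "(\<Sum>k<d. E $$ (r, k) * bmat k c) = (\<Sum>k<d. bmat r k * E $$ (k, c))" by simp
    thus ?thesis using that unfolding e_def
      by (simp only: sum_EB[where E="\<lambda>r c. E $$ (r, c)"] sum_BE[where E="\<lambda>r c. E $$ (r, c)"])
  qed
  have St: "(r = c \<longrightarrow> e r c = e 0 0) \<and> (r \<noteq> c \<and> \<not> (even r \<and> odd c) \<longrightarrow> e r c = 0)"
    if "r < d" "c < d" for r c
    by (rule comm_struct[OF d H1 H2 that])
  have Id: "(\<Sum>k<d. e r k * e k c) = e r c" if "r < d" "c < d" for r c
    using mult_entry[OF Ec Ec that] EE unfolding e_def by simp
  have d0: "0 < d" using d by simp
  have res: "(e 0 0 = 0 \<or> e 0 0 = 1) \<and> (\<forall>r<d. \<forall>c<d. e r c = (if r = c then e 0 0 else 0))"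
    by (rule idem_struct[OF St Id d0])
  have Eeq: "E = e 0 0 \<cdot>\<^sub>m 1\<^sub>m d"
  proof (rule eq_matI)
    fix i j assume "i < dim_row (e 0 0 \<cdot>\<^sub>m 1\<^sub>m d)" "j < dim_col (e 0 0 \<cdot>\<^sub>m (1\<^sub>m d :: 'k mat))"
    hence ij: "i < d" "j < d" by auto
    have "e i j = (if i = j then e 0 0 else 0)" using res ij by blast
    thus "E $$ (i, j) = (e 0 0 \<cdot>\<^sub>m 1\<^sub>m d) $$ (i, j)" using ij unfolding e_def by simp
  next
    show "dim_row E = dim_row (e 0 0 \<cdot>\<^sub>m (1\<^sub>m d :: 'k mat))" using Ec by simp
    show "dim_col E = dim_col (e 0 0 \<cdot>\<^sub>m (1\<^sub>m d :: 'k mat))" using Ec by simp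
  qed
  have "Dm = e 0 0 \<cdot>\<^sub>m 1\<^sub>m d"
  proof -
    have "Dm = P * (e 0 0 \<cdot>\<^sub>m 1\<^sub>m d) * Q" using PEQ Eeq by simp
    also have "\<dots> = (e 0 0 \<cdot>\<^sub>m (P * 1\<^sub>m d)) * Q"
      by (subst mult_smult_distrib[OF P(1) one_carrier_mat]) rule
    also have "\<dots> = (e 0 0 \<cdot>\<^sub>m P) * Q" using P(1) by simp
    also have "\<dots> = e 0 0 \<cdot>\<^sub>m (P * Q)" by (rule mult_smult_assoc_mat[OF P(1) Q])
    finally show ?thesis unfolding PQ .
  qed
  moreover have "Dm $$ (0, 0) = 1" "Dm $$ (u, u) = 0"
    using u0 w0 unfolding Dm_def u_def w_def by auto
  ultimately show False using u0 w0 du unfolding u_def w_def by auto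
qed



theorem corollary4:
  fixes p q :: "'m::{monoid_mult,finite}"
  assumes "monoid_irreducible p" and "monoid_irreducible q"
    and "\<not> monoid_associates p q"
  shows "malg_infinite_rep_type TYPE('m \<Rightarrow> 'k::field)"
proof -
  let ?Rel = "{(V, W). malg_module_iso V W} :: ((nat \<times> (('m \<Rightarrow> 'k) \<Rightarrow> 'k mat)) \<times> _) set"
  let ?S = "{V :: nat \<times> (('m \<Rightarrow> 'k) \<Rightarrow> 'k mat). malg_indecomposable V}"
  define V where "V n = (2 * n + 1, rep (2 * n + 1) p q :: ('m \<Rightarrow> 'k) \<Rightarrow> 'k mat)" for n
  define h where "h n = ?Rel `` {V n}" for n
  have VS: "V n \<in> ?S" for n unfolding V_def using indec[OF assms refl] by simp
  have refl: "malg_module_iso (V n) (V n)" for n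
  proof -
    define d where "d = 2 * n + 1"
    have c: "rep d p q f \<in> carrier_mat d d" for f :: "'m \<Rightarrow> 'k"
      unfolding rep_def by simp
    have inv: "invertible_mat (1\<^sub>m d :: 'k mat)"
      unfolding invertible_mat_def inverts_mat_def by (intro conjI exI[of _ "1\<^sub>m d"]) auto
    have cm: "1\<^sub>m d * rep d p q f = rep d p q f * 1\<^sub>m d" for f :: "'m \<Rightarrow> 'k"
      using left_mult_one_mat[OF c[of f]] right_mult_one_mat[OF c[of f]] by simp
    show ?thesis unfolding malg_module_iso_def V_def fst_conv snd_conv d_def[symmetric]
      using inv cm by (intro bexI[of _ "1\<^sub>m d"] conjI allI) auto
  qed
  have "inj h"
  proof (rule injI)
    fix n m assume "h n = h m"
    moreover have "V n \<in> h n" unfolding h_def using refl by simp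
    ultimately have "V n \<in> h m" by simp
    hence "malg_module_iso (V m) (V n)" unfolding h_def by simp
    thus "n = m" unfolding malg_module_iso_def V_def by simp
  qed
  moreover have "range h \<subseteq> ?S // ?Rel"
    unfolding h_def quotient_def using VS by blast
  ultimately have "infinite (?S // ?Rel)"
    by (meson finite_imageD finite_subset infinite_UNIV_nat)
  thus ?thesis unfolding malg_infinite_rep_type_def .
qed


end
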